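(* Let $k$ be a positive integer such that $k+1$ is an odd prime, and let $p>k(k+1)$ be an odd prime. Then every $\mathbf u\in\pi_{(k+1)p\to p}^{-1}\big((1,2,\ldots,k)\big)\subseteq\mathbb{Z}_{p,k+1}^k$ is $(k,p,k+1)$-proper. In particular, $(1,2,\ldots,k)\in\mathbb{Z}_{p,1}^k$ is eventually $(k,p)$-proper.
   Context: For $x\in\mathbb{R}$, $\lVert x\rVert$ is the distance from $x$ to the nearest integer. $\mathbb{Z}_n$ denotes integers modulo $n$; $\mathbb{Z}_{p,l}:=\mathbb{Z}_{pl}\setminus p\mathbb{Z}_l$ (residues mod $pl$ not divisible by $p$); $\pi_{m\to n}$ is the natural projection $\mathbb{Z}_m\to\mathbb{Z}_n$ for $n\mid m$, coordinatewise on tuples. A tuple $\mathbf v\in\mathbb{Z}_{p,l}^k$ is $(k,p,l)$-proper if either there is an index $i$ with $\gcd(l,v_1,\ldots,v_{i-1},v_{i+1},\ldots,v_k)>1$, or there is $t\in\frac1{lp}\mathbb{Z}$ with $\lVert tv_j\rVert\ge\frac1{k+1}$ for all $j$; otherwise it is $(k,p,l)$-improper, and $I(k,p,l)$ is the set of improper tuples. $\mathbf v\in\mathbb{Z}_{p,1}^k$ is eventually $(k,p)$-proper if $\mathbf v\notin\pi_{lp\to p}I(k,p,l)$ for some positive integer $l$. *)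

theory Defs
  imports Complex_Main "HOL-Computational_Algebra.Primes"
begin

definition dist_int :: "real \<Rightarrow> real" where
  "dist_int x = \<bar>x - of_int (round x)\<bar>"

text \<open>Z_{p,l}: residues mod p*l (represented by 0..p*l-1) not divisible by p.\<close>
definition Zpl :: "nat \<Rightarrow> nat \<Rightarrow> int set" where
  "Zpl p l = {x. 0 \<le> x \<and> x < int (p * l) \<and> \<not> int p dvd x}"

text \<open>k-tuples over Z_{p,l}, as lists of length k (index j = 0..k-1 corresponds to v_{j+1}).\<close>
definition tuples :: "nat \<Rightarrow> nat \<Rightarrow> nat \<Rightarrow> int list set" where
  "tuples k p l = {v. length v = k \<and> set v \<subseteq> Zpl p l}"

definition proj :: "nat \<Rightarrow> int list \<Rightarrow> int list" where
  "proj n v = map (\<lambda>x. x mod int n) v"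

definition proper :: "nat \<Rightarrow> nat \<Rightarrow> nat \<Rightarrow> int list \<Rightarrow> bool" where
  "proper k p l v \<longleftrightarrow>
     (\<exists>i<k. Gcd (insert (int l) {v ! j | j. j < k \<and> j \<noteq> i}) > 1) \<or>
     (\<exists>m::int. \<forall>j<k. dist_int (real_of_int m / real (l * p) * real_of_int (v ! j))
                        \<ge> 1 / real (k + 1))"

definition improper_set :: "nat \<Rightarrow> nat \<Rightarrow> nat \<Rightarrow> int list set" where
  "improper_set k p l = {v \<in> tuples k p l. \<not> proper k p l v}"

definition eventually_proper :: "nat \<Rightarrow> nat \<Rightarrow> int list \<Rightarrow> bool" where
  "eventually_proper k p v \<longleftrightarrow> v \<in> tuples k p 1 \<and>
     (\<exists>l>0. v \<notin> proj p ` improper_set k p l)"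

end

theory Submission
  imports Defs "HOL-Number_Theory.Number_Theory" "HOL-Computational_Algebra.Polynomial"
begin

lemma power_sum_zero:
  fixes q i :: nat
  assumes "prime q" "i < q - 1"
  shows "int q dvd (\<Sum>\<mu><q. (int \<mu>)^i)"
proof (cases "i = 0")
  case True then show ?thesis by simp
next
  case False
  have q1: "q > 1" using assms prime_gt_1_nat by auto
  obtain g where g: "residue_primroot q g" using prime_primitive_root_exists[OF q1 assms(1)] by blast
  have cop: "coprime q g" and ordg: "ord q g = q - 1"
    using g assms by (auto simp: residue_primroot_def totient_prime)
  have ng: "\<not> [g^i = 1] (mod q)" using ord_minimal[of i q g] False assms ordg by auto
  define S where "S = (\<Sum>\<mu><q. \<mu>^i)"
  have inj: "inj_on (\<lambda>\<mu>. g*\<mu> mod q) {..<q}"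
  proof (rule inj_onI)
    fix x y assume xy: "x \<in> {..<q}" "y \<in> {..<q}" "g*x mod q = g*y mod q"
    then have "[g*x = g*y] (mod q)" by (simp add: cong_def)
    then have "[x = y] (mod q)" using cop cong_mult_lcancel_nat[of g q x y]
      by (simp add: coprime_commute)
    then show "x = y" using xy by (simp add: cong_def)
  qed
  have img: "(\<lambda>\<mu>. g*\<mu> mod q) ` {..<q} = {..<q}"
    by (rule endo_inj_surj) (use q1 inj in auto)
  have "S = (\<Sum>\<mu>\<in>(\<lambda>\<mu>. g*\<mu> mod q) ` {..<q}. \<mu>^i)" using img S_def by simp
  also have "\<dots> = (\<Sum>\<mu><q. (g*\<mu> mod q)^i)" by (subst sum.reindex[OF inj]) simp
  finally have S1: "S = (\<Sum>\<mu><q. (g*\<mu> mod q)^i)" .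
  have "[(\<Sum>\<mu><q. (g*\<mu> mod q)^i) = (\<Sum>\<mu><q. (g*\<mu>)^i)] (mod q)"
    by (intro cong_sum cong_pow) (simp add: cong_def)
  also have "(\<Sum>\<mu><q. (g*\<mu>)^i) = g^i * S"
    by (simp add: S_def sum_distrib_left power_mult_distrib)
  finally have "[S = g^i * S] (mod q)" using S1 by simp
  then have "[int S = int (g^i) * int S] (mod int q)"
    by (metis cong_int_iff of_nat_mult)
  then have "int q dvd (int (g^i) - 1) * int S"
    by (simp add: cong_iff_dvd_diff algebra_simps dvd_minus_iff)
      (metis cong_iff_dvd_diff cong_sym dvd_minus_iff minus_diff_eq)
  moreover have "\<not> int q dvd (int (g^i) - 1)"
    using ng by (metis cong_iff_dvd_diff cong_int_iff of_nat_1)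
  moreover have "prime (int q)" using assms by simp
  ultimately have "int q dvd int S" using prime_dvd_mult_iff by blast
  then show ?thesis by (simp add: S_def)
qed

lemma power_sum_top:
  fixes q :: nat
  assumes "prime q"
  shows "int q dvd (\<Sum>\<mu><q. (int \<mu>)^(q-1)) + 1"
proof -
  have q1: "q > 1" using assms prime_gt_1_nat by auto
  have "{..<q} = insert 0 {1..<q}" using q1 by auto
  then have "(\<Sum>\<mu><q. (int \<mu>)^(q-1)) = (\<Sum>\<mu>\<in>{1..<q}. (int \<mu>)^(q-1))"
    using q1 by simp
  moreover have "[(\<Sum>\<mu>\<in>{1..<q}. (int \<mu>)^(q-1)) = (\<Sum>\<mu>\<in>{1..<q}. 1)] (mod int q)"
  proof (rule cong_sum)
    fix \<mu> assume m: "\<mu> \<in> {1..<q}"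
    then have "\<not> q dvd \<mu>" by (auto dest: dvd_imp_le)
    then have "[\<mu>^(q-1) = 1] (mod q)" using fermat_theorem assms by blast
    then show "[(int \<mu>)^(q-1) = 1] (mod int q)" by (metis cong_int_iff of_nat_1 of_nat_power)
  qed
  ultimately have "[(\<Sum>\<mu><q. (int \<mu>)^(q-1)) = int q - 1] (mod int q)"
    using q1 by (simp add: of_nat_diff)
  then have "int q dvd (\<Sum>\<mu><q. (int \<mu>)^(q-1)) - (int q - 1)"
    by (simp add: cong_iff_dvd_diff)
  then have "int q dvd ((\<Sum>\<mu><q. (int \<mu>)^(q-1)) - (int q - 1)) + int q"
    using dvd_add dvd_refl by blast
  moreover have "((\<Sum>\<mu><q. (int \<mu>)^(q-1)) - (int q - 1)) + int q = (\<Sum>\<mu><q. (int \<mu>)^(q-1)) + 1"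
    by simp
  ultimately show ?thesis by metis
qed

lemma poly_sum_le:
  fixes P :: "int poly"
  assumes "degree P \<le> n"
  shows "poly P x = (\<Sum>i\<le>n. coeff P i * x^i)"
proof -
  have "poly P x = (\<Sum>i\<le>degree P. coeff P i * x^i)" by (rule poly_altdef)
  also have "\<dots> = (\<Sum>i\<le>n. coeff P i * x^i)"
    by (rule sum.mono_neutral_left) (use assms in \<open>auto simp: coeff_eq_0\<close>)
  finally show ?thesis .
qed

lemma poly_sum_mod:
  fixes P :: "int poly" and q :: nat
  assumes "prime q" "degree P \<le> q - 1"
  shows "int q dvd (\<Sum>\<mu><q. poly P (int \<mu>)) + coeff P (q - 1)"
proof -
  have "(\<Sum>\<mu><q. poly P (int \<mu>)) = (\<Sum>\<mu><q. \<Sum>i\<le>q-1. coeff P i * int \<mu> ^ i)"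
    using poly_sum_le[OF assms(2)] by simp
  also have "\<dots> = (\<Sum>i\<le>q-1. coeff P i * (\<Sum>\<mu><q. int \<mu> ^ i))"
    by (subst sum.swap) (simp add: sum_distrib_left)
  also have "{..q-1} = insert (q-1) {..<q-1}" by auto
  finally have eq: "(\<Sum>\<mu><q. poly P (int \<mu>)) = coeff P (q-1) * (\<Sum>\<mu><q. int \<mu> ^ (q-1))
      + (\<Sum>i<q-1. coeff P i * (\<Sum>\<mu><q. int \<mu> ^ i))" by simp
  have "int q dvd (\<Sum>i<q-1. coeff P i * (\<Sum>\<mu><q. int \<mu> ^ i))"
    by (intro dvd_sum dvd_mult power_sum_zero assms(1)) simp
  moreover have "int q dvd coeff P (q-1) * ((\<Sum>\<mu><q. int \<mu> ^ (q-1)) + 1)"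
    using power_sum_top[OF assms(1)] by simp
  ultimately have "int q dvd (\<Sum>i<q-1. coeff P i * (\<Sum>\<mu><q. int \<mu> ^ i)) + coeff P (q-1) * ((\<Sum>\<mu><q. int \<mu> ^ (q-1)) + 1)"
    by simp
  then show ?thesis unfolding eq by (simp add: algebra_simps)
qed

lemma dist_int_bound:
  fixes M N r :: int
  assumes "N > 0" "r \<le> M mod N" "M mod N \<le> N - r"
  shows "dist_int (real_of_int M / real_of_int N) \<ge> real_of_int r / real_of_int N"
proof -
  define n where "n = round (real_of_int M / real_of_int N)"
  have "M = N * (M div N) + M mod N" by simp
  have "\<bar>M - n * N\<bar> \<ge> r"
  proof (cases "n \<le> M div N")
    case True
    have a: "n * N \<le> (M div N) * N" using True assms by (simp add: mult_right_mono)
    have b: "M = (M div N) * N + M mod N" by simp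
    from a b assms have "M - n * N \<ge> r" by linarith
    then show ?thesis by simp
  next
    case False
    have a: "(M div N + 1) * N \<le> n * N" using False assms by (simp add: mult_right_mono)
    then have a': "(M div N) * N + N \<le> n * N" by (simp add: algebra_simps)
    have b: "M = (M div N) * N + M mod N" by simp
    from a' b assms have "n * N - M \<ge> r" by linarith
    then show ?thesis by simp
  qed
  then have "real_of_int r \<le> \<bar>real_of_int M - real_of_int n * real_of_int N\<bar>"
    by (metis of_int_abs of_int_diff of_int_le_iff of_int_mult)
  also have "\<dots> = \<bar>real_of_int M / real_of_int N - real_of_int n\<bar> * real_of_int N"
    using assms by (simp add: abs_mult[symmetric] field_simps)
  finally show ?thesis using assms unfolding dist_int_def n_def
    by (simp add: field_simps)
qed

lemma key:
  fixes q :: nat and a :: "nat \<Rightarrow> int"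
  assumes q: "prime q" "odd q"
    and y0: "y0 \<in> {1..q-1}" "int q dvd a y0"
    and y1: "y1 \<in> {1..q-1}" "\<not> int q dvd a y1"
  shows "\<exists>s c::int. \<forall>y\<in>{1..q-1}. (s * a y + c * int y) mod int q \<noteq> 0
                                    \<and> (s * a y + c * int y) mod int q \<noteq> int q - 1"
proof (rule ccontr)
  assume H: "\<not> ?thesis"
  let ?Y = "{1..q-1}"
  let ?B = "{1..int q - 1}"
  have q1: "q > 1" using q prime_gt_1_nat by auto
  have qi: "prime (int q)" using q by simp
  have cardY: "card ?Y = q - 1" by simp
  define R where "R = {\<mu>\<in>{..<q}. \<exists>y\<in>?Y. int q dvd a y - int \<mu> * int y}"
  define W where "W = (\<Prod>\<beta>\<in>?B. \<beta>)"
  define Qp where "Qp = (\<Prod>y\<in>?Y. [:a y, - int y:])"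
  have WY: "W = (\<Prod>y\<in>?Y. int y)"
  proof -
    have "int ` ?Y = ?B" using q1 by (simp add: image_int_atLeastAtMost of_nat_diff)
    then have "W = (\<Prod>\<beta>\<in>int ` ?Y. \<beta>)" by (simp add: W_def)
    also have "\<dots> = (\<Prod>y\<in>?Y. int y)" by (subst prod.reindex) auto
    finally show ?thesis .
  qed
  have degQ: "degree Qp = q - 1"
  proof -
    have "degree Qp = (\<Sum>y\<in>?Y. degree [:a y, - int y:])" unfolding Qp_def
      by (rule degree_prod_eq_sum_degree) auto
    also have "\<dots> = (\<Sum>y\<in>?Y. 1)" by (intro sum.cong) auto
    finally show ?thesis by simp
  qed
  have lcQ: "coeff Qp (q-1) = W"
  proof -
    have "coeff Qp (q-1) = lead_coeff Qp" using degQ by simp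
    also have "\<dots> = (\<Prod>y\<in>?Y. lead_coeff [:a y, - int y:])" unfolding Qp_def by (rule lead_coeff_prod)
    also have "\<dots> = (\<Prod>y\<in>?Y. (-1) * int y)" by (intro prod.cong) auto
    also have "\<dots> = (\<Prod>y\<in>?Y. (-1::int)) * (\<Prod>y\<in>?Y. int y)" by (rule prod.distrib)
    also have "\<dots> = (-1)^(q-1) * W" by (simp only: WY prod_constant cardY)
    also have "(-1::int)^(q-1) = 1" using q q1 by (simp add: neg_one_even_power)
    finally show ?thesis by simp
  qed
  have polyQ: "poly Qp x = (\<Prod>y\<in>?Y. a y - x * int y)" for x
    unfolding Qp_def by (simp add: poly_prod algebra_simps)
  have sum1: "int q dvd (\<Sum>\<mu><q. poly Qp (int \<mu>)) + W"
    using poly_sum_mod[OF q(1), of Qp] degQ lcQ by simp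
  have inR: "int q dvd poly Qp (int \<mu>)" if "\<mu> \<in> R" for \<mu>
  proof -
    from that obtain y where "y \<in> ?Y" "int q dvd a y - int \<mu> * int y" unfolding R_def by blast
    then show ?thesis unfolding polyQ by (meson dvd_prodI finite_atLeastAtMost dvd_trans dvd_refl)
  qed
  have notR: "[poly Qp (int \<mu>) = W] (mod int q)" if "\<mu> < q" "\<mu> \<notin> R" for \<mu>
  proof -
    define g where "g y = (a y - int \<mu> * int y) mod int q" for y
    have gB: "g y \<in> ?B" if "y \<in> ?Y" for y
    proof -
      have "\<not> int q dvd a y - int \<mu> * int y" using \<open>\<mu> < q\<close> \<open>\<mu> \<notin> R\<close> that unfolding R_def by blast
      then have "g y \<noteq> 0" unfolding g_def by (simp add: dvd_eq_mod_eq_0)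
      moreover have "0 \<le> g y" "g y < int q" using q1 unfolding g_def by auto
      ultimately show ?thesis by auto
    qed
    have inj: "inj_on g ?Y"
    proof (rule ccontr)
      assume ni: "\<not> inj_on g ?Y"
      have "card (g ` ?Y) \<noteq> card ?Y" using ni eq_card_imp_inj_on[of ?Y g] by auto
      moreover have "card (g ` ?Y) \<le> card ?Y" by (rule card_image_le) simp
      ultimately have "card (g ` ?Y) < card ?B" using cardY q1 by simp
      moreover have "g ` ?Y \<subseteq> ?B" using gB by auto
      then have "\<not> ?B \<subseteq> g ` ?Y"
      proof (intro notI)
        assume "?B \<subseteq> g ` ?Y"
        then have "card ?B \<le> card (g ` ?Y)" by (intro card_mono) auto
        with \<open>card (g ` ?Y) < card ?B\<close> show False by simp
      qed
      then obtain \<beta> where b: "\<beta> \<in> ?B" "\<beta> \<notin> g ` ?Y" by blast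
      have "coprime \<beta> (int q)"
      proof -
        have "\<not> int q dvd \<beta>" using b(1) by (auto dest: zdvd_imp_le)
        then have "coprime (int q) \<beta>" using prime_imp_coprime[OF qi] by blast
    then show ?thesis by (simp add: coprime_commute)
      qed
      then obtain bi where bi: "[\<beta> * bi = 1] (mod int q)" using cong_solve_coprime_int by blast
      then have bid: "int q dvd \<beta> * bi - 1" by (simp add: cong_iff_dvd_diff)
      define s where "s = - bi"
      define c where "c = bi * int \<mu>"
      define X where "X y = (s * a y + c * int y) mod int q" for y
      have "\<not> (\<forall>y\<in>?Y. X y \<noteq> 0 \<and> X y \<noteq> int q - 1)"
      proof
        assume A: "\<forall>y\<in>?Y. X y \<noteq> 0 \<and> X y \<noteq> int q - 1"
        then have A': "\<forall>y\<in>?Y. (s * a y + c * int y) mod int q \<noteq> 0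
                                    \<and> (s * a y + c * int y) mod int q \<noteq> int q - 1"
          unfolding X_def .
        have "\<exists>s c::int. \<forall>y\<in>?Y. (s * a y + c * int y) mod int q \<noteq> 0
                                    \<and> (s * a y + c * int y) mod int q \<noteq> int q - 1"
          by (rule exI[of _ s], rule exI[of _ c], rule A')
        from H this show False by (rule notE)
      qed
      then obtain y where y0: "y \<in> ?Y" "X y = 0 \<or> X y = int q - 1" by blast
      then have y: "y \<in> ?Y" "(s * a y + c * int y) mod int q = 0 \<or>
          (s * a y + c * int y) mod int q = int q - 1" unfolding X_def by auto
      define d where "d = a y - int \<mu> * int y"
      have sd: "s * a y + c * int y = - bi * d" by (simp add: s_def c_def d_def algebra_simps)
      show False
        using y(2)
      proof
        assume "(s * a y + c * int y) mod int q = 0"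
        then have "int q dvd s * a y + c * int y" by (simp add: dvd_eq_mod_eq_0)
        then have "int q dvd bi * d" unfolding sd by (metis dvd_minus_iff mult_minus_left)
        then have "int q dvd \<beta> * (bi * d)" by simp
        moreover have "int q dvd (\<beta> * bi - 1) * d" using bid by simp
        ultimately have "int q dvd \<beta> * (bi * d) - (\<beta> * bi - 1) * d" by (rule dvd_diff)
        then have "int q dvd d" by (simp add: algebra_simps)
        then show False using \<open>\<mu> < q\<close> \<open>\<mu> \<notin> R\<close> y(1) unfolding R_def d_def by blast
      next
        assume "(s * a y + c * int y) mod int q = int q - 1"
        then have "(s * a y + c * int y + 1) mod int q = 0"
          by (metis mod_add_left_eq diff_add_cancel mod_self)
        then have "int q dvd s * a y + c * int y + 1" by (simp add: dvd_eq_mod_eq_0)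
        then have "int q dvd - bi * d + 1" unfolding sd .
        then have "int q dvd \<beta> * (- bi * d + 1)" by (rule dvd_mult)
        moreover have "int q dvd (\<beta> * bi - 1) * d" using bid by simp
        ultimately have "int q dvd \<beta> * (- bi * d + 1) + (\<beta> * bi - 1) * d" by (rule dvd_add)
        then have "int q dvd \<beta> - d" by (simp add: algebra_simps)
        then have "int q dvd d - \<beta>" by (metis dvd_minus_iff minus_diff_eq)
        then have "d mod int q = \<beta> mod int q" by (simp add: mod_eq_dvd_iff)
        also have "\<beta> mod int q = \<beta>" using b(1) by simp
        finally have "g y = \<beta>" unfolding g_def d_def .
        then show False using b(2) y(1) by blast
      qed
    qed
    have img: "g ` ?Y = ?B"
    proof (rule card_subset_eq)
      show "g ` ?Y \<subseteq> ?B" using gB by auto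
      show "card (g ` ?Y) = card ?B" using card_image[OF inj] cardY q1 by simp
    qed simp
    have "[poly Qp (int \<mu>) = (\<Prod>y\<in>?Y. g y)] (mod int q)"
      unfolding polyQ g_def by (intro cong_prod) (simp add: cong_def)
    also have "(\<Prod>y\<in>?Y. g y) = (\<Prod>\<beta>\<in>g ` ?Y. \<beta>)" using prod.reindex[OF inj, of id] by simp
    also have "\<dots> = W" using img W_def by simp
    finally show ?thesis .
  qed
  have "[(\<Sum>\<mu><q. poly Qp (int \<mu>)) = (\<Sum>\<mu><q. if \<mu> \<in> R then 0 else W)] (mod int q)"
  proof (rule cong_sum)
    fix \<mu> assume "\<mu> \<in> {..<q}"
    then show "[poly Qp (int \<mu>) = (if \<mu> \<in> R then 0 else W)] (mod int q)"
      using inR notR by (auto simp: cong_0_iff)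
  qed
  also have "(\<Sum>\<mu><q. if \<mu> \<in> R then 0 else W) = int (card ({..<q} - R)) * W"
  proof -
    have "(\<Sum>\<mu><q. if \<mu> \<in> R then 0 else W) = (\<Sum>\<mu>\<in>{..<q} - R. W)"
      by (rule sum.mono_neutral_cong_right) auto
    then show ?thesis by simp
  qed
  finally have "int q dvd (\<Sum>\<mu><q. poly Qp (int \<mu>)) - int (card ({..<q} - R)) * W"
    by (simp add: cong_iff_dvd_diff)
  from dvd_diff[OF sum1 this] have "int q dvd (int (card ({..<q} - R)) + 1) * W"
    by (simp add: algebra_simps)
  moreover have "\<not> int q dvd W"
  proof
    assume "int q dvd W"
    then have "int q dvd (\<Prod>\<beta>\<in>?B. \<beta>)" using W_def by simp
    then obtain \<beta> where "\<beta> \<in> ?B" "int q dvd \<beta>"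
      using prime_dvd_prod_iff[OF finite_atLeastAtMost_int qi, of "\<lambda>x. x"] by auto
    then show False by (auto dest: zdvd_imp_le)
  qed
  ultimately have dv: "int q dvd int (card ({..<q} - R)) + 1" using qi prime_dvd_mult_iff by blast
  have R0: "0 \<in> R" using y0 q1 unfolding R_def by auto
  have "coprime (int y1) (int q)"
  proof -
    have "\<not> q dvd y1" using y1(1) by (auto dest: dvd_imp_le)
    then have "\<not> int q dvd int y1" by simp
    then have "coprime (int q) (int y1)" using prime_imp_coprime[OF qi] by blast
    then show ?thesis by (simp add: coprime_commute)
  qed
  then obtain yi where yi: "[int y1 * yi = 1] (mod int q)" using cong_solve_coprime_int by blast
  define m1 where "m1 = nat ((a y1 * yi) mod int q)"
  have m1i: "int m1 = (a y1 * yi) mod int q" unfolding m1_def using q1 by simp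
  have "(a y1 * yi) mod int q < int q" using q1 by simp
  then have "m1 < q" using m1i by simp
  have "int q dvd int y1 * yi - 1" using yi by (simp add: cong_iff_dvd_diff)
  then have A: "int q dvd a y1 * (int y1 * yi - 1)" by simp
  have B: "int q dvd (a y1 * yi - int m1) * int y1" unfolding m1i by (simp add: mod_eq_dvd_iff[symmetric] mod_diff_right_eq[symmetric])
  have C: "a y1 - int m1 * int y1 = (a y1 * yi - int m1) * int y1 - a y1 * (int y1 * yi - 1)"
    by (simp add: algebra_simps)
  have "int q dvd a y1 - int m1 * int y1" unfolding C using A B by (rule dvd_diff[rotated])
  then have R1: "m1 \<in> R" using \<open>m1 < q\<close> y1(1) unfolding R_def by blast
  have "m1 \<noteq> 0"
  proof
    assume "m1 = 0"
    then have "int q dvd a y1 * yi" using m1i by (simp add: dvd_eq_mod_eq_0)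
    then have "int q dvd a y1 * yi * int y1" by simp
    from this A have "int q dvd a y1 * yi * int y1 - a y1 * (int y1 * yi - 1)" by (rule dvd_diff)
    then show False using y1(2) by (simp add: algebra_simps)
  qed
  have "{0, m1} \<subseteq> R" using R0 R1 by auto
  then have "card {0, m1} \<le> card R" by (rule card_mono[rotated]) (simp add: R_def)
  then have "card R \<ge> 2" using \<open>m1 \<noteq> 0\<close> by simp
  moreover have "R \<subseteq> {..<q}" unfolding R_def by auto
  ultimately have "card ({..<q} - R) + 2 \<le> q"
  proof -
    have "card ({..<q} - R) = card {..<q} - card R"
      by (rule card_Diff_subset) (use \<open>R \<subseteq> {..<q}\<close> finite_subset in auto)
    moreover have "card R \<le> q" using \<open>R \<subseteq> {..<q}\<close> card_mono[of "{..<q}" R] by simp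
    ultimately show ?thesis using \<open>card R \<ge> 2\<close> by simp
  qed
  then have "0 < int (card ({..<q} - R)) + 1" "int (card ({..<q} - R)) + 1 < int q" by auto
  then show False using dv by (auto dest: zdvd_imp_le)
qed

theorem proposition4p4:
  fixes k p :: nat
  assumes "k > 0" and "prime (k + 1)" and "odd (k + 1)"
    and "prime p" and "odd p" and "p > k * (k + 1)"
  shows "(\<forall>u \<in> tuples k p (k + 1). proj p u = map int [1..<k + 1] \<longrightarrow> proper k p (k + 1) u)
         \<and> eventually_proper k p (map int [1..<k + 1])"
proof -
  have p0: "p > 0" using assms(4) prime_gt_0_nat by blast
  have pk: "p > k"
  proof -
    have "k * 1 \<le> k * (k+1)" by (rule mult_left_mono) auto
    then show ?thesis using assms(6) by simp
  qed
  have "(k+1)*k < p" using assms(6) by (simp add: mult.commute)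
  then have qk: "int (k+1) * int k < int p" by (metis of_nat_mult of_nat_less_iff)
  have part1: "\<forall>u \<in> tuples k p (k + 1). proj p u = map int [1..<k + 1] \<longrightarrow> proper k p (k + 1) u"
  proof (intro ballI impI)
    fix u assume u: "u \<in> tuples k p (k + 1)" and pu: "proj p u = map int [1..<k + 1]"
    have len: "length u = k" using u by (simp add: tuples_def)
    have rng: "0 \<le> u!j" "u!j < int (p * (k+1))" if "j < k" for j
    proof -
      have "u!j \<in> set u" using that len by simp
      then have "u!j \<in> Zpl p (k+1)" using u by (auto simp: tuples_def)
      then show "0 \<le> u!j" "u!j < int (p * (k+1))" by (auto simp: Zpl_def)
    qed
    have cp: "int p dvd u!j - int (j+1)" if "j < k" for j
    proof -
      have "(proj p u)!j = u!j mod int p" using that len by (simp add: proj_def)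
      moreover have "(map int [1..<k + 1])!j = int (j+1)" using that by (simp del: upt_Suc add: nth_upt)
      ultimately have "u!j mod int p = int (j+1)" using pu by simp
      then show ?thesis using dvd_minus_mod[of "int p" "u!j"] by simp
    qed
    define N where "N = int ((k+1)*p)"
    have Npos: "N > 0" unfolding N_def using p0 by (metis of_nat_0_less_iff mult_pos_pos zero_less_Suc add.commute plus_1_eq_Suc)
    have suff: "proper k p (k+1) u" if m: "\<forall>j<k. int p \<le> (m * u!j) mod N \<and> (m * u!j) mod N \<le> N - int p" for m
    proof -
      have "\<forall>j<k. dist_int (real_of_int m / real ((k+1) * p) * real_of_int (u ! j)) \<ge> 1 / real (k + 1)"
      proof (intro allI impI)
        fix j assume j: "j < k"
        have D: "dist_int (real_of_int (m * u!j) / real_of_int N) \<ge> real_of_int (int p) / real_of_int N"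
          using dist_int_bound[OF Npos] m j by blast
        have E: "real_of_int m / real ((k+1) * p) * real_of_int (u ! j) = real_of_int (m * u!j) / real_of_int N"
          by (simp add: N_def)
        have F: "real_of_int (int p) / real_of_int N = 1 / real (k+1)"
        proof -
          have "real p + real k * real p > 0" using p0 by (simp add: add_pos_nonneg)
          then show ?thesis by (simp add: N_def field_simps)
        qed
        show "dist_int (real_of_int m / real ((k+1) * p) * real_of_int (u ! j)) \<ge> 1 / real (k + 1)"
          unfolding E F[symmetric] by (rule D)
      qed
      then show ?thesis unfolding proper_def by blast
    qed
    consider (A) "\<forall>j<k. \<not> int (k+1) dvd u!j" | (B) "\<forall>j<k. int (k+1) dvd u!j"
      | (C) j0 j1 where "j0 < k" "int (k+1) dvd u!j0" "j1 < k" "\<not> int (k+1) dvd u!j1" by blast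
    then show "proper k p (k+1) u"
    proof cases
      case A
      show ?thesis
      proof (rule suff[of "int p"], intro allI impI)
        fix j assume j: "j < k"
        define r where "r = u!j mod int (k+1)"
        have r1: "r \<noteq> 0" using A j by (simp add: r_def dvd_eq_mod_eq_0)
        have r2: "0 \<le> r" "r < int (k+1)" by (simp_all add: r_def)
        have NN: "N = int p * int (k+1)" unfolding N_def by (simp only: of_nat_mult mult.commute)
        have "(int p * u!j) mod N = int p * r"
          unfolding NN r_def by (rule mod_mult_mult1)
        moreover have "int p * 1 \<le> int p * r" using r1 r2 by (intro mult_left_mono) auto
        moreover have "int p * r \<le> int p * int k" using r1 r2 by (intro mult_left_mono) auto
        moreover have "N - int p = int p * int k" by (simp add: N_def algebra_simps)
        ultimately show "int p \<le> (int p * u!j) mod N \<and> (int p * u!j) mod N \<le> N - int p" by simp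
      qed
    next
      case B
      define G where "G = Gcd (insert (int (k+1)) {u ! j | j. j < k \<and> j \<noteq> 0})"
      have "int (k+1) dvd G" unfolding G_def using B by (auto intro!: Gcd_greatest)
      moreover have "G \<noteq> 0" unfolding G_def by (simp add: Gcd_0_iff)
      moreover have "G \<ge> 0" unfolding G_def by simp
      ultimately have "int (k+1) \<le> G" by (auto dest: zdvd_imp_le)
      then have "G > 1" using assms(1) by simp
      then show ?thesis unfolding proper_def G_def using assms(1) by blast
    next
      case C
      define a where "a y = u!(y-1)" for y
      have "\<exists>s c::int. \<forall>y\<in>{1..(k+1)-1}. (s * a y + c * int y) mod int (k+1) \<noteq> 0
                                    \<and> (s * a y + c * int y) mod int (k+1) \<noteq> int (k+1) - 1"
        by (rule key[OF assms(2,3), of "j0+1" _ "j1+1"]) (use C in \<open>auto simp: a_def\<close>)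
      then obtain s c where sc: "\<forall>y\<in>{1..k}. (s * a y + c * int y) mod int (k+1) \<noteq> 0
                                    \<and> (s * a y + c * int y) mod int (k+1) \<noteq> int k"
        by auto
      define q where "q = int (k+1)"
      have q1: "q > 1" using assms(1) by (simp add: q_def)
      define c' where "c' = c mod q"
      define t where "t = (c' * int p) div q + 1"
      define e where "e = t * q - c' * int p"
      define m where "m = int p * s + q * t"
      have e: "1 \<le> e" "e \<le> q"
      proof -
        have "c' * int p = (c' * int p) div q * q + (c' * int p) mod q" by simp
        then have "e = q - (c' * int p) mod q" by (simp add: e_def t_def algebra_simps)
        moreover have "0 \<le> (c' * int p) mod q" "(c' * int p) mod q < q" using q1 by auto
        ultimately show "1 \<le> e" "e \<le> q" by auto
      qed
      obtain \<gamma> where g: "c = c' + q * \<gamma>" unfolding c'_def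
        by (metis mult.commute mod_div_mult_eq add.commute)
      show ?thesis
      proof (rule suff[of m], intro allI impI)
        fix j assume j: "j < k"
        define U where "U = u!j"
        define Y where "Y = int (j+1)"
        define w where "w = (s * U + c * Y) mod q"
        have w: "1 \<le> w" "w \<le> q - 2"
        proof -
          have "j+1 \<in> {1..k}" using j by auto
          then have X: "(s * a (j+1) + c * int (j+1)) mod int (k+1) \<noteq> 0
              \<and> (s * a (j+1) + c * int (j+1)) mod int (k+1) \<noteq> int k" by (rule bspec[OF sc])
          have "a (j+1) = u!j" by (simp add: a_def)
          then have "w \<noteq> 0" "w \<noteq> int k" using X unfolding w_def U_def Y_def q_def by simp_all
          moreover have "0 \<le> w" "w < q" using q1 by (auto simp: w_def)
          ultimately show "1 \<le> w" "w \<le> q - 2" by (auto simp: q_def)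
        qed
        obtain \<alpha> where al: "U = Y + int p * \<alpha>" using cp[OF j] unfolding U_def Y_def
          by (metis dvd_def add_diff_cancel_left' diff_add_cancel)
        obtain \<beta> where be: "s * U + c * Y = w + q * \<beta>" unfolding w_def
          by (metis mult.commute mod_div_mult_eq add.commute)
        have "m * U - (int p * w + e * Y) = int p * q * (\<beta> + t * \<alpha> - \<gamma> * Y)"
        proof -
          have wexp: "w = s * U + c * Y - q * \<beta>" using be by simp
          show ?thesis unfolding m_def e_def wexp unfolding al g by (simp add: algebra_simps)
        qed
        moreover have NN2: "N = int p * q" unfolding N_def q_def by (simp add: algebra_simps)
        ultimately have dv: "N dvd m * U - (int p * w + e * Y)" by (metis dvd_triv_left)
        have lo: "0 \<le> int p * w + e * Y" and lo2: "int p \<le> int p * w + e * Y"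
        proof -
          have "int p * 1 \<le> int p * w" using w by (intro mult_left_mono) auto
          moreover have "0 \<le> e * Y" using e by (simp add: Y_def)
          ultimately show "0 \<le> int p * w + e * Y" "int p \<le> int p * w + e * Y" by auto
        qed
        have hi: "int p * w + e * Y \<le> N - int p"
        proof -
          have "int p * w \<le> int p * (q - 2)" using w by (intro mult_left_mono) auto
          moreover have "e * Y \<le> q * int k" using e j by (intro mult_mono) (auto simp: Y_def)
          moreover have "N - int p = int p * (q - 2) + int p" by (simp add: N_def q_def algebra_simps)
          ultimately show ?thesis using qk by (simp add: q_def)
        qed
        have "(m * U) mod N = int p * w + e * Y"
        proof -
          have "(m * U) mod N = (int p * w + e * Y) mod N" using dv by (simp add: mod_eq_dvd_iff)
          also have "\<dots> = int p * w + e * Y" using lo hi p0 by (intro mod_pos_pos_trivial) auto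
          finally show ?thesis .
        qed
        then show "int p \<le> (m * u!j) mod N \<and> (m * u!j) mod N \<le> N - int p"
          using lo2 hi by (simp add: U_def)
      qed
    qed
  qed
  have part2: "eventually_proper k p (map int [1..<k + 1])"
  proof -
    have T: "map int [1..<k + 1] \<in> tuples k p 1"
    proof -
      have "x \<in> Zpl p 1" if "x \<in> set (map int [1..<k + 1])" for x
      proof -
        from that obtain i where "1 \<le> i" "i < k+1" "x = int i" by auto
        moreover have "\<not> int p dvd int i" if "1 \<le> i" "i < k+1" for i
          using that pk by (auto dest: dvd_imp_le)
        ultimately show ?thesis using pk by (auto simp: Zpl_def)
      qed
      then show ?thesis by (auto simp: tuples_def)
    qed
    have "map int [1..<k + 1] \<notin> proj p ` improper_set k p (k+1)"
    proof
      assume "map int [1..<k + 1] \<in> proj p ` improper_set k p (k+1)"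
      then obtain u where "u \<in> tuples k p (k+1)" "\<not> proper k p (k+1) u" "map int [1..<k + 1] = proj p u"
        by (auto simp: improper_set_def)
      then show False using part1 by metis
    qed
    then show ?thesis using T unfolding eventually_proper_def by (intro conjI exI[of _ "k+1"]) auto
  qed
  show ?thesis using part1 part2 by blast
qed

end
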